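(* Let $x\in\mathbb{R}^d$ and $i\in\{1,\dots,d\}$ with $g_i:=\nabla_i f(x)\ne0$. Suppose $\hat g_i$ is a real random variable with $\mathbb{E}\hat g_i=g_i$, variance $\sigma_i^2$, whose distribution is unimodal and symmetric (about $g_i$). Then $$\rho_i:=\mathrm{Prob}(\mathrm{sign}\,\hat g_i=\mathrm{sign}\,g_i)\ge\frac12+\frac12\frac{|g_i|}{|g_i|+\sqrt3\sigma_i}>\frac12.$$
   Context: $\mathrm{sign}\,t=1,0,-1$ for $t>0,t=0,t<0$. *)

theory Defs
  imports "HOL-Probability.Probability"
begin

definition cdf_of :: "'a measure \<Rightarrow> ('a \<Rightarrow> real) \<Rightarrow> real \<Rightarrow> real" where
  "cdf_of M X t = measure M {\<omega> \<in> space M. X \<omega> \<le> t}"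

text \<open>Unimodal (Khintchine): there is a mode m such that the CDF is convex
  on (-inf,m) and concave on (m,inf).\<close>
definition unimodal :: "'a measure \<Rightarrow> ('a \<Rightarrow> real) \<Rightarrow> bool" where
  "unimodal M X \<longleftrightarrow>
     (\<exists>m. convex_on {..<m} (cdf_of M X) \<and> concave_on {m<..} (cdf_of M X))"

definition symmetric_about :: "'a measure \<Rightarrow> ('a \<Rightarrow> real) \<Rightarrow> real \<Rightarrow> bool" where
  "symmetric_about M X c \<longleftrightarrow> distr M borel X = distr M borel (\<lambda>\<omega>. 2 * c - X \<omega>)"

end

theory Submission
  imports Defs
begin
lemma ennreal_plus_le: "0 \<le> x \<Longrightarrow> ennreal (x + y) \<le> ennreal x + ennreal y"
proof (cases "0 \<le> y")
  case True
  assume "0 \<le> x" then show ?thesis using True by (simp add: ennreal_plus)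
next
  case False
  assume "0 \<le> x"
  then have "ennreal (x + y) \<le> ennreal x" using False by (intro ennreal_leI) simp
  then show ?thesis by (simp add: add_increasing2)
qed

lemma moment_lb:
  fixes M :: "'a measure" and V :: "'a \<Rightarrow> real" and k q R :: real
  assumes P: "prob_space M" and Vm[measurable]: "V \<in> borel_measurable M"
    and k: "0 < k" and q: "0 \<le> q" "q \<le> 1" and R: "k \<le> R" "R * q \<le> k"
    and h1: "\<And>t. 0 < t \<Longrightarrow> t \<le> k \<Longrightarrow> 1 - q \<le> measure M {\<omega>\<in>space M. t \<le> V \<omega>}"
    and h2: "\<And>t. k < t \<Longrightarrow> k - t * q \<le> k * measure M {\<omega>\<in>space M. t \<le> V \<omega>}"
  shows "ennreal ((1-q)*k^2 + ((R^2 - 2*q/(3*k)*R^3) - (k^2 - 2*q/(3*k)*k^3)))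
     \<le> (\<integral>\<^sup>+\<omega>. ennreal ((V \<omega>)^2) \<partial>M)"
proof -
  interpret prob_space M by fact
  interpret pair_sigma_finite M lborel
    by (simp add: lborel.sigma_finite_measure_axioms pair_sigma_finite_def sigma_finite_measure_axioms)
  define G where "G = (\<lambda>\<omega> t. ennreal (2*t) * (if 0 \<le> t \<and> t \<le> V \<omega> then 1 else 0))"
  have Gm: "case_prod G \<in> borel_measurable (M \<Otimes>\<^sub>M lborel)"
    unfolding G_def by measurable
  have step1: "(\<integral>\<^sup>+\<omega>. (\<integral>\<^sup>+t. G \<omega> t \<partial>lborel) \<partial>M) \<le> (\<integral>\<^sup>+\<omega>. ennreal ((V \<omega>)^2) \<partial>M)"
  proof (rule nn_integral_mono)
    fix \<omega> assume "\<omega> \<in> space M"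
    show "(\<integral>\<^sup>+t. G \<omega> t \<partial>lborel) \<le> ennreal ((V \<omega>)^2)"
    proof (cases "0 \<le> V \<omega>")
      case True
      have "(\<integral>\<^sup>+t. G \<omega> t \<partial>lborel) = (\<integral>\<^sup>+t. ennreal (2*t) * indicator {0..V \<omega>} t \<partial>lborel)"
        by (rule nn_integral_cong) (auto simp: G_def split: split_indicator)
      also have "\<dots> = ennreal ((V \<omega>)^2 - 0^2)"
        by (rule nn_integral_FTC_Icc) (auto intro!: derivative_eq_intros True)
      finally show ?thesis by simp
    next
      case False
      have "G \<omega> = (\<lambda>t. 0)"
        using False by (auto simp: G_def fun_eq_iff)
      then show ?thesis by simp
    qed
  qed
  have step2: "(\<integral>\<^sup>+\<omega>. (\<integral>\<^sup>+t. G \<omega> t \<partial>lborel) \<partial>M) = (\<integral>\<^sup>+t. (\<integral>\<^sup>+\<omega>. G \<omega> t \<partial>M) \<partial>lborel)"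
    using Fubini'[OF Gm] by simp
  define \<phi> where "\<phi> = (\<lambda>t::real. ennreal (2*t*(1-q)) * indicator {0..k} t + ennreal (2*t - 2*q/k*t^2) * indicator {k..R} t)"
  have step3: "AE t in lborel. \<phi> t \<le> (\<integral>\<^sup>+\<omega>. G \<omega> t \<partial>M)"
    using AE_lborel_singleton[of k]
  proof eventually_elim
    case (elim t)
    show ?case
    proof (cases "0 \<le> t")
      case False
      then show ?thesis using k by (simp add: \<phi>_def split: split_indicator)
    next
      case True
      have "(\<integral>\<^sup>+\<omega>. G \<omega> t \<partial>M) = (\<integral>\<^sup>+\<omega>. ennreal (2*t) * indicator {\<omega>\<in>space M. t \<le> V \<omega>} \<omega> \<partial>M)"
        by (rule nn_integral_cong) (use True in \<open>auto simp: G_def split: split_indicator\<close>)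
      also have "\<dots> = ennreal (2*t) * emeasure M {\<omega>\<in>space M. t \<le> V \<omega>}"
        by (rule nn_integral_cmult_indicator) measurable
      also have "\<dots> = ennreal (2*t * measure M {\<omega>\<in>space M. t \<le> V \<omega>})"
        by (simp add: emeasure_eq_measure ennreal_mult True)
      finally have eq: "(\<integral>\<^sup>+\<omega>. G \<omega> t \<partial>M) = ennreal (2*t * measure M {\<omega>\<in>space M. t \<le> V \<omega>})" .
      show ?thesis
      proof (cases "t \<le> k")
        case True2: True
        show ?thesis
        proof (cases "t = 0")
          case True
          then show ?thesis by (simp add: \<phi>_def split: split_indicator)
        next
          case False
          with True have "0 < t" by simp
          from h1[OF this True2] have "2*t*(1-q) \<le> 2*t * measure M {\<omega>\<in>space M. t \<le> V \<omega>}"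
            using \<open>0 < t\<close> by (intro mult_left_mono) auto
          then show ?thesis using True True2 elim unfolding eq \<phi>_def
            by (auto split: split_indicator intro: ennreal_leI)
        qed
      next
        case False
        then have "k < t" by simp
        show ?thesis
        proof (cases "t \<le> R")
          case True3: True
          from h2[OF \<open>k < t\<close>] have "(2*t/k) * (k - t*q) \<le> (2*t/k) * (k * measure M {\<omega>\<in>space M. t \<le> V \<omega>})"
            using k True by (intro mult_left_mono) auto
          then have "2*t - 2*q/k*t^2 \<le> 2*t * measure M {\<omega>\<in>space M. t \<le> V \<omega>}"
            using k by (simp add: field_simps power2_eq_square)
          then show ?thesis using False True3 unfolding eq \<phi>_def
            by (auto split: split_indicator intro: ennreal_leI)
        next
          case False
          then show ?thesis using \<open>k < t\<close> by (simp add: \<phi>_def split: split_indicator)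
        qed
      qed
    qed
  qed
  have step4: "(\<integral>\<^sup>+t. \<phi> t \<partial>lborel) = ennreal ((1-q)*k^2) + ennreal ((R^2 - 2*q/(3*k)*R^3) - (k^2 - 2*q/(3*k)*k^3))"
  proof -
    have "(\<integral>\<^sup>+t. \<phi> t \<partial>lborel) = (\<integral>\<^sup>+t. ennreal (2*t*(1-q)) * indicator {0..k} t \<partial>lborel) +
       (\<integral>\<^sup>+t. ennreal (2*t - 2*q/k*t^2) * indicator {k..R} t \<partial>lborel)"
      unfolding \<phi>_def by (rule nn_integral_add) auto
    also have "(\<integral>\<^sup>+t. ennreal (2*t*(1-q)) * indicator {0..k} t \<partial>lborel) = ennreal (k^2*(1-q) - 0^2*(1-q))"
      by (rule nn_integral_FTC_Icc) (use k q in \<open>auto intro!: derivative_eq_intros\<close>)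
    also have "(\<integral>\<^sup>+t. ennreal (2*t - 2*q/k*t^2) * indicator {k..R} t \<partial>lborel) = ennreal ((R^2 - 2*q/(3*k)*R^3) - (k^2 - 2*q/(3*k)*k^3))"
    proof (rule nn_integral_FTC_Icc)
      fix x assume x: "x \<in> {k..R}"
      show "((\<lambda>t. t^2 - 2*q/(3*k)*t^3) has_real_derivative (2*x - 2*q/k*x^2)) (at x)"
        using k by (auto intro!: derivative_eq_intros simp: field_simps power2_eq_square)
      have "x * q \<le> k" using x R q by (meson atLeastAtMost_iff mult_right_mono order_trans)
      then have "2*q/k*x^2 \<le> 2*x" using k x by (simp add: field_simps power2_eq_square)
      then show "0 \<le> 2*x - 2*q/k*x^2" by simp
    qed (use R in auto)
    finally show ?thesis by (simp add: mult.commute)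
  qed
  have "ennreal ((1-q)*k^2 + ((R^2 - 2*q/(3*k)*R^3) - (k^2 - 2*q/(3*k)*k^3))) \<le> (\<integral>\<^sup>+t. \<phi> t \<partial>lborel)"
    unfolding step4 by (rule ennreal_plus_le) (use q in simp)
  also have "\<dots> \<le> (\<integral>\<^sup>+t. (\<integral>\<^sup>+\<omega>. G \<omega> t \<partial>M) \<partial>lborel)"
    by (rule nn_integral_mono_AE[OF step3])
  also have "\<dots> \<le> (\<integral>\<^sup>+\<omega>. ennreal ((V \<omega>)^2) \<partial>M)" using step1 step2 by simp
  finally show ?thesis .
qed


lemma a1: fixes k q :: real assumes "0<k" "0<q"
  shows "(1-q)*k^2 + (((k/q)^2 - 2*q/(3*k)*(k/q)^3) - (k^2 - 2*q/(3*k)*k^3)) = k^2/(3*q^2) - q*k^2/3"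
  using assms by (simp add: field_simps power2_eq_square power3_eq_cube)
lemma a2: fixes q :: real assumes "0 \<le> q" "q \<le> 1" shows "(1-q)^2 \<le> 1 - q^3"
proof -
  have "q*(q+2)*(1-q) \<ge> 0" using assms by simp
  then show ?thesis by (simp add: power2_eq_square power3_eq_cube algebra_simps)
qed

lemma eps_le:
  fixes x y c :: real
  assumes "0 < c" and "\<And>d. 0 < d \<Longrightarrow> d < c \<Longrightarrow> x \<le> y + d"
  shows "x \<le> y"
proof (rule field_le_epsilon)
  fix e :: real assume "0 < e"
  have "x \<le> y + min e (c/2)" using assms \<open>0 < e\<close> by (intro assms(2)) auto
  then show "x \<le> y + e" by linarith
qed

theorem lemma1:
  fixes M :: "'a measure" and X :: "'a \<Rightarrow> real" and g \<sigma> :: real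
  assumes "prob_space M"
    and "X \<in> borel_measurable M"
    and "integrable M X"
    and "integrable M (\<lambda>\<omega>. (X \<omega>)\<^sup>2)"
    and "g \<noteq> 0"
    and "prob_space.expectation M X = g"
    and "\<sigma> \<ge> 0"
    and "prob_space.variance M X = \<sigma>\<^sup>2"
    and "unimodal M X"
    and "symmetric_about M X g"
  shows "measure M {\<omega> \<in> space M. sgn (X \<omega>) = sgn g}
           \<ge> 1/2 + 1/2 * (\<bar>g\<bar> / (\<bar>g\<bar> + sqrt 3 * \<sigma>))
         \<and> 1/2 + 1/2 * (\<bar>g\<bar> / (\<bar>g\<bar> + sqrt 3 * \<sigma>)) > 1/2"
proof -
  interpret prob_space M by fact
  have Xm[measurable]: "X \<in> borel_measurable M" by fact
  define k where "k = \<bar>g\<bar>"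
  define s where "s = sqrt 3 * \<sigma>"
  have k: "0 < k" using assms(5) by (simp add: k_def)
  have s: "0 \<le> s" using assms(7) by (simp add: s_def)
  define A where "A = (\<lambda>t. {\<omega>\<in>space M. X \<omega> \<le> g - t})"
  define B where "B = (\<lambda>t. {\<omega>\<in>space M. g + t \<le> X \<omega>})"
  define V where "V = (\<lambda>\<omega>. \<bar>X \<omega> - g\<bar>)"
  have Vm[measurable]: "V \<in> borel_measurable M" unfolding V_def by measurable
  have AB_ev[measurable]: "A t \<in> events" "B t \<in> events" for t unfolding A_def B_def by measurable
  have symm: "prob (A t) = prob (B t)" for t
  proof -
    have "measure (distr M borel X) {..g-t} = measure (distr M borel (\<lambda>\<omega>. 2*g - X \<omega>)) {..g-t}"
      using assms(10) by (simp add: symmetric_about_def)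
    also have "measure (distr M borel X) {..g-t} = prob (A t)"
      by (subst measure_distr) (auto simp: A_def intro!: arg_cong[where f=prob])
    also have "measure (distr M borel (\<lambda>\<omega>. 2*g - X \<omega>)) {..g-t} = prob (B t)"
      by (subst measure_distr) (auto simp: B_def intro!: arg_cong[where f=prob])
    finally show ?thesis .
  qed
  have Vt: "prob {\<omega>\<in>space M. t \<le> V \<omega>} = 2 * prob (A t)" if "0 < t" for t
  proof -
    have "{\<omega>\<in>space M. t \<le> V \<omega>} = A t \<union> B t" using that by (auto simp: A_def B_def V_def)
    moreover have "A t \<inter> B t = {}" using that by (auto simp: A_def B_def)
    ultimately show ?thesis using symm[of t] by (simp add: finite_measure_Union)
  qed
  have half: "prob (A t) \<le> 1/2" if "0 < t" for t
    using Vt[OF that] prob_le_1[of "{\<omega>\<in>space M. t \<le> V \<omega>}"] by simp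
  define p where "p = 2 * prob (A k)"
  define q where "q = 1 - p"
  have q01: "0 \<le> q" "q \<le> 1" using half[OF k] by (auto simp: q_def p_def)
  have h1: "1 - q \<le> prob {\<omega>\<in>space M. t \<le> V \<omega>}" if "0 < t" "t \<le> k" for t
  proof -
    have "prob (A k) \<le> prob (A t)" using that by (intro finite_measure_mono) (auto simp: A_def)
    then show ?thesis using Vt[OF that(1)] by (simp add: q_def p_def)
  qed
  have h2: "k - t * q \<le> k * prob {\<omega>\<in>space M. t \<le> V \<omega>}" if kt: "k < t" for t
  proof -
    have t0: "0 < t" using k kt by simp
    define a where "a = prob (A t)"
    define b where "b = prob (A k)"
    have b2: "b \<le> 1/2" using half[OF k] by (simp add: b_def)
    have a0: "0 \<le> a" by (simp add: a_def)
    obtain m where cv: "convex_on {..<m} (cdf_of M X)" and cc: "concave_on {m<..} (cdf_of M X)"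
      using assms(9) unfolding unimodal_def by blast
    have F: "cdf_of M X u = prob (A (g-u))" for u by (simp add: cdf_of_def A_def)
    define C where "C = (\<lambda>u. {\<omega>\<in>space M. u < X \<omega>})"
    have FC: "cdf_of M X u = 1 - prob (C u)" for u
    proof -
      have "space M - A (g-u) = C u" by (auto simp: A_def C_def)
      then have "prob (C u) = 1 - prob (A (g-u))" using prob_compl[OF AB_ev(1)] by metis
      then show ?thesis using F by simp
    qed
    have key: "t*b \<le> k*a + (t-k)/2"
    proof (rule eps_le[of "k/2"])
      show "0 < k/2" using k by simp
    next
      fix d assume d: "0 < d" "d < k/2"
      have td: "0 < t - d" using d kt by simp
      show "t*b \<le> k*a + (t-k)/2 + d"
      proof (cases "g \<le> m")
        case True
        define \<tau> where "\<tau> = (t-k)/(t-d)"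
        have \<tau>: "0 \<le> \<tau>" "\<tau> \<le> 1" using td kt d by (auto simp: \<tau>_def field_simps)
        have e: "\<tau>*(t-d) = t-k" using td by (simp add: \<tau>_def)
        have pt: "(1-\<tau>) *\<^sub>R (g-t) + \<tau> *\<^sub>R (g-d) = g - k"
        proof -
          have "(1-\<tau>)*(g-t) + \<tau>*(g-d) = g - t + \<tau>*(t-d)" by (simp add: algebra_simps)
          then show ?thesis using e by simp
        qed
        have "cdf_of M X ((1-\<tau>) *\<^sub>R (g-t) + \<tau> *\<^sub>R (g-d)) \<le> (1-\<tau>) * cdf_of M X (g-t) + \<tau> * cdf_of M X (g-d)"
          by (rule convex_onD[OF cv \<tau>]) (use True d t0 in auto)
        then have ineq: "b \<le> (1-\<tau>) * a + \<tau> * prob (A d)"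
          unfolding pt F by (simp add: a_def b_def)
        have c2: "prob (A d) \<le> 1/2" using half d by simp
        have "(t-d)*b \<le> (t-d)*((1-\<tau>) * a + \<tau> * prob (A d))"
          using ineq td by (intro mult_left_mono) auto
        also have "\<dots> = (t-d)*a - (\<tau>*(t-d))*a + (\<tau>*(t-d))*prob (A d)" by (simp add: algebra_simps)
        also have "\<dots> = (k-d)*a + (t-k)*prob (A d)" unfolding e by (simp add: algebra_simps)
        also have "(t-k)*prob (A d) \<le> (t-k)*(1/2)" using c2 kt by (intro mult_left_mono) auto
        finally have e: "(t-d)*b \<le> (k-d)*a + (t-k)*(1/2)" by simp
        have e': "t*b - d*b \<le> k*a - d*a + (t-k)/2" using e by (simp add: algebra_simps)
        have "d*b \<le> d/2" using b2 d by (simp add: mult_left_mono[of b "1/2" d, simplified])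
        moreover have "0 \<le> d*a" using a0 d by simp
        ultimately show ?thesis using e' d by argo
      next
        case False
        define \<tau> where "\<tau> = (k-2*d)/(t-d)"
        have \<tau>: "0 \<le> \<tau>" "\<tau> \<le> 1" using td kt d by (auto simp: \<tau>_def field_simps)
        have e: "\<tau>*(t-d) = k-2*d" using td by (simp add: \<tau>_def)
        have pt: "(1-\<tau>) *\<^sub>R (g+d) + \<tau> *\<^sub>R (g+t) = g + k - d"
        proof -
          have "(1-\<tau>)*(g+d) + \<tau>*(g+t) = g + d + \<tau>*(t-d)" by (simp add: algebra_simps)
          then show ?thesis using e by simp
        qed
        have "cdf_of M X ((1-\<tau>) *\<^sub>R (g+d) + \<tau> *\<^sub>R (g+t)) \<ge> (1-\<tau>) * cdf_of M X (g+d) + \<tau> * cdf_of M X (g+t)"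
          by (rule concave_onD[OF cc \<tau>]) (use False d t0 in auto)
        then have ineq: "prob (C (g+k-d)) \<le> (1-\<tau>) * prob (C (g+d)) + \<tau> * prob (C (g+t))"
          unfolding pt FC by (simp add: algebra_simps)
        have C1: "b \<le> prob (C (g+k-d))" unfolding b_def symm
          using d by (intro finite_measure_mono) (auto simp: B_def C_def)
        have C2: "prob (C (g+d)) \<le> 1/2"
        proof -
          have "prob (C (g+d)) \<le> prob (B d)" by (intro finite_measure_mono) (auto simp: B_def C_def)
          then show ?thesis using half[of d] d symm[of d] by simp
        qed
        have C3: "prob (C (g+t)) \<le> a"
        proof -
          have "prob (C (g+t)) \<le> prob (B t)" by (intro finite_measure_mono) (auto simp: B_def C_def)
          then show ?thesis using symm[of t] by (simp add: a_def)
        qed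
        have "b \<le> (1-\<tau>) * (1/2) + \<tau> * a"
        proof -
          have "(1-\<tau>) * prob (C (g+d)) \<le> (1-\<tau>) * (1/2)" using C2 \<tau> by (intro mult_left_mono) auto
          moreover have "\<tau> * prob (C (g+t)) \<le> \<tau> * a" using C3 \<tau> by (intro mult_left_mono) auto
          ultimately show ?thesis using ineq C1 by linarith
        qed
        then have "(t-d)*b \<le> (t-d)*((1-\<tau>) * (1/2) + \<tau> * a)"
          using td by (intro mult_left_mono) auto
        also have "\<dots> = (t-d)*(1/2) - (\<tau>*(t-d))*(1/2) + (\<tau>*(t-d))*a" by (simp add: field_simps)
        also have "\<dots> = (t-k+d)*(1/2) + (k-2*d)*a" unfolding e by (simp add: field_simps)
        finally have e: "(t-d)*b \<le> (t-k+d)*(1/2) + (k-2*d)*a" .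
        have e': "t*b - d*b \<le> (t-k+d)/2 + k*a - 2*(d*a)" using e by (simp add: algebra_simps)
        have "d*b \<le> d/2" using b2 d by (simp add: mult_left_mono[of b "1/2" d, simplified])
        moreover have "0 \<le> d*a" using a0 d by simp
        ultimately show ?thesis using e' d by argo
      qed
    qed
    have "t * q = t - 2*(t*b)" by (simp add: q_def p_def b_def algebra_simps)
    moreover have "k * prob {\<omega>\<in>space M. t \<le> V \<omega>} = 2*(k*a)" using Vt[OF t0] by (simp add: a_def)
    ultimately show ?thesis using key by argo
  qed
  have mom: "(\<integral>\<^sup>+\<omega>. ennreal ((V \<omega>)^2) \<partial>M) = ennreal (\<sigma>^2)"
  proof -
    have eqf: "(\<lambda>\<omega>. (X \<omega> - g)^2) = (\<lambda>\<omega>. ((X \<omega>)^2 + (-(2*g)) * X \<omega>) + g^2)"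
      by (auto simp: power2_eq_square algebra_simps fun_eq_iff)
    have int: "integrable M (\<lambda>\<omega>. (X \<omega> - g)^2)"
      unfolding eqf by (intro Bochner_Integration.integrable_add integrable_mult_right assms(3,4) integrable_const)
    have "(\<integral>\<^sup>+\<omega>. ennreal ((V \<omega>)^2) \<partial>M) = (\<integral>\<^sup>+\<omega>. ennreal ((X \<omega> - g)^2) \<partial>M)"
      by (simp add: V_def)
    also have "\<dots> = ennreal (\<integral>\<omega>. (X \<omega> - g)^2 \<partial>M)"
      by (rule nn_integral_eq_integral[OF int]) auto
    also have "(\<integral>\<omega>. (X \<omega> - g)^2 \<partial>M) = \<sigma>^2" using assms(8) assms(6) by simp
    finally show ?thesis .
  qed
  have pbound: "p \<le> s / (k + s)"
  proof (rule ccontr)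
    assume "\<not> p \<le> s / (k + s)"
    then have ps: "s / (k + s) < p" by simp
    have LB: "(1-q)*k^2 + ((R^2 - 2*q/(3*k)*R^3) - (k^2 - 2*q/(3*k)*k^3)) \<le> \<sigma>^2"
      if "k \<le> R" "R * q \<le> k" for R
    proof -
      have "ennreal ((1-q)*k^2 + ((R^2 - 2*q/(3*k)*R^3) - (k^2 - 2*q/(3*k)*k^3))) \<le> ennreal (\<sigma>^2)"
        unfolding mom[symmetric]
        by (rule moment_lb[OF assms(1) Vm k q01 that h1 h2])
      then show ?thesis by (simp add: ennreal_le_iff)
    qed
    show False
    proof (cases "q = 0")
      case True
      have "(k+\<sigma>)^2 \<le> \<sigma>^2" using LB[of "k+\<sigma>"] True assms(7) k by (simp add: power2_eq_square algebra_simps)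
      moreover have "\<sigma>^2 < (k+\<sigma>)^2" using k assms(7) by (intro power_strict_mono) auto
      ultimately show False by simp
    next
      case False
      then have qp: "0 < q" using q01 by simp
      have "k \<le> k/q" using k qp q01 by (simp add: field_simps)
      moreover have "(k/q) * q \<le> k" using qp by simp
      ultimately have "k^2/(3*q^2) - q*k^2/3 \<le> \<sigma>^2"
        using LB[of "k/q"] by (simp only: a1[OF k qp])
      moreover have "s^2 = 3 * \<sigma>^2" by (simp add: s_def power_mult_distrib)
      ultimately have L2: "k^2/q^2 - q*k^2 \<le> s^2" by simp
      have "s * q < k * p"
      proof -
        have "s < p * (k + s)" using ps k s by (simp add: divide_less_eq add_pos_nonneg)
        then show ?thesis by (simp add: q_def algebra_simps)
      qed
      then have "(s*q)^2 < (k*p)^2" using s qp by (intro power_strict_mono) auto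
      then have "s^2 * q^2 < k^2*p^2" by (simp add: power_mult_distrib)
      then have "s^2 < k^2*p^2/q^2" using qp by (simp add: less_divide_eq)
      moreover have "k^2*p^2/q^2 \<le> k^2/q^2 - q*k^2"
      proof -
        have "p^2 \<le> 1 - q^3" using a2[OF q01] by (simp add: q_def)
        then have "k^2*p^2 \<le> k^2*(1 - q^3)" using k by (intro mult_left_mono) auto
        then have "k^2*p^2/q^2 \<le> k^2*(1 - q^3)/q^2" using qp by (intro divide_right_mono) auto
        also have "k^2*(1 - q^3)/q^2 = k^2/q^2 - q*k^2" using qp by (simp add: field_simps power2_eq_square power3_eq_cube)
        finally show ?thesis .
      qed
      ultimately show False using L2 by simp
    qed
  qed
  have sgnev: "measure M {\<omega> \<in> space M. sgn (X \<omega>) = sgn g} = 1 - p/2"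
  proof (cases "0 < g")
    case True
    have "{\<omega> \<in> space M. sgn (X \<omega>) = sgn g} = space M - A k"
      using True by (auto simp: A_def k_def sgn_if split: if_splits)
    then show ?thesis using prob_compl[OF AB_ev(1)[of k]] by (simp add: p_def)
  next
    case False
    then have gn: "g < 0" using assms(5) by simp
    have "{\<omega> \<in> space M. sgn (X \<omega>) = sgn g} = space M - B k"
      using gn by (auto simp: B_def k_def sgn_if split: if_splits)
    then show ?thesis using prob_compl[OF AB_ev(2)[of k]] symm[of k] by (simp add: p_def)
  qed
  have "1/2 + 1/2 * (k / (k + s)) \<le> 1 - p/2"
  proof -
    have "k / (k+s) = 1 - s/(k+s)" using k s by (simp add: field_simps)
    then show ?thesis using pbound by linarith
  qed
  moreover have "0 < k / (k + s)" using k s by simp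
  ultimately show ?thesis unfolding sgnev k_def s_def by linarith
qed

end
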